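(* Assume the setup in the context, with the fine-tuning regime, and let $0<\epsilon\le 1$ be such that $|\langle\tau_i,\tau_j\rangle|\le\epsilon\|\tau_i\|\|\tau_j\|$ for all $i\neq j$. Let $\mathbf{T}=[\tau_1,\dots,\tau_T]\in\mathbb{R}^{d\times T}$, let $\mathbf{W}_e\in\mathbb{R}^{T\times M}$ and $\mathbf{W}_d\in\mathbb{R}^{M\times T}$ be arbitrary, and let $\hat{\mathbf{T}}=\mathbf{T}\mathbf{W}_e\mathbf{W}_d$ with $i$-th column $\hat\tau_i$ and column error $e_i=\hat\tau_i-\tau_i$. Fix $i\in[T]$ and $\alpha_i\in[0,1]$, let $\theta_{\mathrm{Neg},i}=\theta_0-\alpha_i\hat\tau_i$, and assume local smoothness holds with radius $r\ge 2\sqrt{C}+\|e_i\|$. Then for every $j\in[T]$ with $j\neq i$, $$\mathcal{L}_j(\theta_{\mathrm{Neg},i})-\mathcal{L}_j(\theta_0)\le L_jC\Big(\frac{5}{2}+2\epsilon\Big)+L_j\|e_i\|^2.$$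
   Context: Setup: $\theta_0\in\mathbb{R}^d$ is a pretrained parameter vector; $\theta_1,\dots,\theta_T\in\mathbb{R}^d$ are fine-tuned parameters and $\tau_i:=\theta_i-\theta_0$ are task vectors. For each task $i$, $\mathcal{L}_i:\mathbb{R}^d\to\mathbb{R}$ is a differentiable loss (population risk). Norms are Euclidean. Fine-tuning regime: $\nabla\mathcal{L}_i(\theta_i)=0$ for all $i\in[T]$, and there is $C>0$ with $\|\tau_i\|^2\le C$ for all $i$. Local smoothness with radius $r>0$: for each $i$ there is $L_i\ge 0$ such that for all $\theta$ with $\|\theta-\theta_i\|\le r$, $\big|\mathcal{L}_i(\theta)-\mathcal{L}_i(\theta_i)-\langle\theta-\theta_i,\nabla\mathcal{L}_i(\theta_i)\rangle\big|\le\frac{L_i}{2}\|\theta-\theta_i\|^2$. $\hat{\mathbf{T}}$ is the task-vector matrix reconstructed from the basis $\mathbf{B}=\mathbf{T}\mathbf{W}_e$ via the decoder $\mathbf{W}_d$. *)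

theory Defs
  imports "HOL-Analysis.Analysis"
begin

definition task_matrix :: "('t::finite \<Rightarrow> real^'d) \<Rightarrow> real^'t^'d" where
  "task_matrix tau = (\<chi> r c. tau c $ r)"

end

theory Submission
  imports Defs
begin

theorem mainTheorem8:
  fixes theta0 :: "real^'d::finite"
    and theta :: "'t::finite \<Rightarrow> real^'d"
    and Loss :: "'t \<Rightarrow> real^'d \<Rightarrow> real"
    and grad :: "'t \<Rightarrow> real^'d \<Rightarrow> real^'d"
    and Lc :: "'t \<Rightarrow> real"
    and C r eps :: real
    and We :: "real^'m::finite^'t"
    and Wd :: "real^'t^'m"
    and i :: 't and alpha :: real
  defines "tau \<equiv> (\<lambda>k. theta k - theta0)"
  defines "That \<equiv> task_matrix tau ** We ** Wd"
  defines "tauhat \<equiv> (\<lambda>k. column k That)"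
  defines "e \<equiv> (\<lambda>k. tauhat k - tau k)"
  assumes grad: "\<And>k x. (Loss k has_derivative (\<lambda>h. grad k x \<bullet> h)) (at x)"
    and stationary: "\<And>k. grad k (theta k) = 0"
    and C_pos: "C > 0"
    and tau_bound: "\<And>k. (norm (tau k))\<^sup>2 \<le> C"
    and r_pos: "r > 0"
    and Lc_nonneg: "\<And>k. Lc k \<ge> 0"
    and smooth: "\<And>k x. norm (x - theta k) \<le> r \<Longrightarrow>
        \<bar>Loss k x - Loss k (theta k) - (x - theta k) \<bullet> grad k (theta k)\<bar>
          \<le> Lc k / 2 * (norm (x - theta k))\<^sup>2"
    and eps: "0 < eps" "eps \<le> 1"
    and incoh: "\<And>k l. k \<noteq> l \<Longrightarrow> \<bar>tau k \<bullet> tau l\<bar> \<le> eps * norm (tau k) * norm (tau l)"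
    and alpha: "0 \<le> alpha" "alpha \<le> 1"
    and r_big: "r \<ge> 2 * sqrt C + norm (e i)"
  shows "\<forall>j. j \<noteq> i \<longrightarrow>
      Loss j (theta0 - alpha *\<^sub>R tauhat i) - Loss j theta0
        \<le> Lc j * C * (5/2 + 2 * eps) + Lc j * (norm (e i))\<^sup>2"
proof (intro allI impI)
  fix j assume ji: "j \<noteq> i"
  have nb: "norm (tau k) \<le> sqrt C" for k
    using tau_bound[of k] by (metis norm_ge_zero real_le_rsqrt)
  let ?x = "theta0 - alpha *\<^sub>R tauhat i"
  have th: "theta j = theta0 + tau j" "tauhat i = tau i + e i"
    by (auto simp: tau_def e_def)
  have xd: "?x - theta j = - (tau j + alpha *\<^sub>R tau i + alpha *\<^sub>R e i)"
    using th by (simp add: algebra_simps)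
  have ae: "norm (alpha *\<^sub>R e i) \<le> norm (e i)" "norm (alpha *\<^sub>R tau i) \<le> sqrt C"
    using alpha nb[of i] by (auto simp: mult_le_one mult_left_le_one_le intro: order_trans[OF mult_left_le_one_le])
  have "norm (?x - theta j) \<le> norm (tau j) + norm (alpha *\<^sub>R tau i) + norm (alpha *\<^sub>R e i)"
    unfolding xd norm_minus_cancel by (meson norm_triangle_le norm_triangle_ineq add_mono order_refl)
  also have "\<dots> \<le> r" using ae nb[of j] r_big by linarith
  finally have "\<bar>Loss j ?x - Loss j (theta j)\<bar> \<le> Lc j / 2 * (norm (?x - theta j))\<^sup>2"
    using smooth[of ?x j] stationary[of j] by simp
  then have s1: "Loss j ?x - Loss j (theta j) \<le> Lc j / 2 * (norm (?x - theta j))\<^sup>2"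
    by (meson abs_le_D1 order_trans)
  have d0: "theta0 - theta j = - tau j" using th by simp
  have "norm (theta0 - theta j) \<le> r" unfolding d0 norm_minus_cancel
    using nb[of j] r_big norm_ge_zero[of "e i"] C_pos by (smt (verit) real_sqrt_ge_zero)
  then have "\<bar>Loss j theta0 - Loss j (theta j)\<bar> \<le> Lc j / 2 * (norm (tau j))\<^sup>2"
    using smooth[of theta0 j] stationary[of j] unfolding d0 norm_minus_cancel by simp
  then have s2: "Loss j (theta j) - Loss j theta0 \<le> Lc j / 2 * (norm (tau j))\<^sup>2"
    by linarith
  define u where "u = tau j + alpha *\<^sub>R tau i"
  have "(norm (?x - theta j))\<^sup>2 = (norm (u + alpha *\<^sub>R e i))\<^sup>2"
    unfolding xd norm_minus_cancel u_def by simp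
  also have "\<dots> \<le> 2 * (norm u)\<^sup>2 + 2 * (norm (alpha *\<^sub>R e i))\<^sup>2"
  proof -
    have "norm (u + alpha *\<^sub>R e i) \<le> norm u + norm (alpha *\<^sub>R e i)" by (rule norm_triangle_ineq)
    hence "(norm (u + alpha *\<^sub>R e i))\<^sup>2 \<le> (norm u + norm (alpha *\<^sub>R e i))\<^sup>2"
      by (simp add: power_mono)
    also have "\<dots> \<le> 2 * (norm u)\<^sup>2 + 2 * (norm (alpha *\<^sub>R e i))\<^sup>2"
      by (smt (verit) sum_squares_bound power2_sum zero_le_power2 power2_diff)
    finally show ?thesis .
  qed
  also have "\<dots> \<le> 2 * (norm u)\<^sup>2 + 2 * (norm (e i))\<^sup>2"
    using ae(1) by (simp add: power_mono)
  finally have q1: "(norm (?x - theta j))\<^sup>2 \<le> 2 * (norm u)\<^sup>2 + 2 * (norm (e i))\<^sup>2" .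
  have "(norm u)\<^sup>2 = (norm (tau j))\<^sup>2 + alpha\<^sup>2 * (norm (tau i))\<^sup>2 + 2 * alpha * (tau j \<bullet> tau i)"
    unfolding u_def power2_norm_eq_inner by (simp add: algebra_simps inner_commute power2_eq_square)
  moreover have "alpha\<^sup>2 * (norm (tau i))\<^sup>2 \<le> C"
    using tau_bound[of i] alpha by (smt (verit) mult_left_le_one_le power_le_one zero_le_power2)
  moreover have "tau j \<bullet> tau i \<le> eps * C"
  proof -
    have "norm (tau j) * norm (tau i) \<le> sqrt C * sqrt C"
      using nb[of j] nb[of i] C_pos by (intro mult_mono) auto
    hence "norm (tau j) * norm (tau i) \<le> C" using C_pos by simp
    hence "eps * (norm (tau j) * norm (tau i)) \<le> eps * C" using eps by (simp add: mult_left_mono)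
    thus ?thesis using incoh[OF ji] by (simp add: mult.assoc abs_le_iff)
  qed
  moreover have "2 * alpha * (tau j \<bullet> tau i) \<le> 2 * (eps * C)"
  proof -
    have "alpha * (tau j \<bullet> tau i) \<le> eps * C"
    proof (cases "tau j \<bullet> tau i \<ge> 0")
      case True thus ?thesis using alpha \<open>tau j \<bullet> tau i \<le> eps * C\<close>
        by (smt (verit) mult_left_le_one_le)
    next
      case False thus ?thesis using alpha eps C_pos
        by (smt (verit) mult_nonneg_nonpos mult_pos_pos)
    qed
    thus ?thesis by simp
  qed
  ultimately have q2: "(norm u)\<^sup>2 \<le> C * (2 + 2 * eps)"
    using tau_bound[of j] by (simp add: algebra_simps)
  have tot: "(norm (?x - theta j))\<^sup>2 + (norm (tau j))\<^sup>2 \<le> 2 * (C * (5/2 + 2 * eps)) + 2 * (norm (e i))\<^sup>2"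
    using q1 q2 tau_bound[of j] by (simp add: algebra_simps)
  have "Loss j ?x - Loss j theta0 \<le> Lc j / 2 * ((norm (?x - theta j))\<^sup>2 + (norm (tau j))\<^sup>2)"
    using s1 s2 by (simp add: algebra_simps)
  also have "\<dots> \<le> Lc j / 2 * (2 * (C * (5/2 + 2 * eps)) + 2 * (norm (e i))\<^sup>2)"
    using tot Lc_nonneg[of j] by (simp add: mult_left_mono)
  also have "\<dots> = Lc j * C * (5/2 + 2 * eps) + Lc j * (norm (e i))\<^sup>2"
    by (simp add: algebra_simps)
  finally show "Loss j ?x - Loss j theta0 \<le> Lc j * C * (5/2 + 2 * eps) + Lc j * (norm (e i))\<^sup>2" .
qed

end
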